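(* For an idempotent semiring $S$ the following are equivalent: (1) $S$ satisfies both $xyz\approx xzy$ and $x\approx xyx+x+xyx$; (2) $S$ satisfies $xz\approx xzy+xz+xzy$; (3) $\mathcal{L}^{\bullet}$ is the least distributive lattice congruence on $S$ (equivalently, $S$ satisfies $x\approx xy+x+xy$). In particular, for such $S$ the multiplicative reduct $(S,\cdot)$ is a left normal band.
   Context: An idempotent semiring is an algebra $(S,+,\cdot)$ with $(S,+)$, $(S,\cdot)$ bands and both distributive laws; addition not assumed commutative. $a\,\mathcal{L}^{\bullet}\,b$ iff $ab=a$ and $ba=b$. A distributive lattice congruence is a congruence $\rho$ with $S/\rho$ satisfying $x+y\approx y+x$, $xy\approx yx$, $x+xy\approx x$. A left normal band is a band satisfying $xyz\approx xzy$. *)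

theory Defs
  imports Main
begin

definition idem_semiring :: "('a \<Rightarrow> 'a \<Rightarrow> 'a) \<Rightarrow> ('a \<Rightarrow> 'a \<Rightarrow> 'a) \<Rightarrow> bool" where
  "idem_semiring add mul \<longleftrightarrow>
     (\<forall>x y z. add (add x y) z = add x (add y z)) \<and> (\<forall>x. add x x = x) \<and>
     (\<forall>x y z. mul (mul x y) z = mul x (mul y z)) \<and> (\<forall>x. mul x x = x) \<and>
     (\<forall>x y z. mul x (add y z) = add (mul x y) (mul x z)) \<and>
     (\<forall>x y z. mul (add x y) z = add (mul x z) (mul y z))"

definition Lbullet :: "('a \<Rightarrow> 'a \<Rightarrow> 'a) \<Rightarrow> 'a \<Rightarrow> 'a \<Rightarrow> bool" where
  "Lbullet mul a b \<longleftrightarrow> mul a b = a \<and> mul b a = b"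

definition is_congruence :: "('a \<Rightarrow> 'a \<Rightarrow> 'a) \<Rightarrow> ('a \<Rightarrow> 'a \<Rightarrow> 'a) \<Rightarrow> ('a \<Rightarrow> 'a \<Rightarrow> bool) \<Rightarrow> bool" where
  "is_congruence add mul \<rho> \<longleftrightarrow> equivp \<rho> \<and>
     (\<forall>a b c. \<rho> a b \<longrightarrow> \<rho> (add a c) (add b c) \<and> \<rho> (add c a) (add c b)
                         \<and> \<rho> (mul a c) (mul b c) \<and> \<rho> (mul c a) (mul c b))"

definition dl_congruence :: "('a \<Rightarrow> 'a \<Rightarrow> 'a) \<Rightarrow> ('a \<Rightarrow> 'a \<Rightarrow> 'a) \<Rightarrow> ('a \<Rightarrow> 'a \<Rightarrow> bool) \<Rightarrow> bool" where
  "dl_congruence add mul \<rho> \<longleftrightarrow> is_congruence add mul \<rho> \<and>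
     (\<forall>x y. \<rho> (add x y) (add y x)) \<and>
     (\<forall>x y. \<rho> (mul x y) (mul y x)) \<and>
     (\<forall>x y. \<rho> (add x (mul x y)) x)"

definition least_dl_congruence :: "('a \<Rightarrow> 'a \<Rightarrow> 'a) \<Rightarrow> ('a \<Rightarrow> 'a \<Rightarrow> 'a) \<Rightarrow> ('a \<Rightarrow> 'a \<Rightarrow> bool) \<Rightarrow> bool" where
  "least_dl_congruence add mul \<rho> \<longleftrightarrow> dl_congruence add mul \<rho> \<and>
     (\<forall>\<sigma>. dl_congruence add mul \<sigma> \<longrightarrow> (\<forall>a b. \<rho> a b \<longrightarrow> \<sigma> a b))"

definition left_normal_band :: "('a \<Rightarrow> 'a \<Rightarrow> 'a) \<Rightarrow> bool" where
  "left_normal_band mul \<longleftrightarrow>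
     (\<forall>x y z. mul (mul x y) z = mul x (mul y z)) \<and> (\<forall>x. mul x x = x) \<and>
     (\<forall>x y z. mul (mul x y) z = mul (mul x z) y)"

end

theory Submission
  imports Defs
begin

locale isr = fixes add (infixl "\<oplus>" 65) and mul (infixl "\<cdot>" 70)
  assumes aa: "(x \<oplus> y) \<oplus> z = x \<oplus> (y \<oplus> z)" and ai: "x \<oplus> x = x"
  and ma: "(x \<cdot> y) \<cdot> z = x \<cdot> (y \<cdot> z)" and mi: "x \<cdot> x = x"
  and dl: "x \<cdot> (y \<oplus> z) = x \<cdot> y \<oplus> x \<cdot> z" and dr: "(x \<oplus> y) \<cdot> z = x \<cdot> z \<oplus> y \<cdot> z"
begin

lemma c3_of_least:
  assumes "least_dl_congruence add mul (Lbullet mul)"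
  shows "x = x \<cdot> y \<oplus> x \<oplus> x \<cdot> y"
proof -
  from assms have d: "dl_congruence add mul (Lbullet mul)" unfolding least_dl_congruence_def by blast
  hence c: "is_congruence add mul (Lbullet mul)"
    and cm: "\<And>x y. Lbullet mul (x \<oplus> y) (y \<oplus> x)"
    and ab: "\<And>x y. Lbullet mul (x \<oplus> x \<cdot> y) x"
    unfolding dl_congruence_def by auto
  have e: "equivp (Lbullet mul)" using c unfolding is_congruence_def by blast
  have 1: "x \<oplus> x \<cdot> y = x" using ab[of x y] unfolding Lbullet_def by (metis dl ma)
  have t: "Lbullet mul (x \<cdot> y \<oplus> x) x"
    using equivp_transp[OF e cm[of "x \<cdot> y" x] ab[of x y]] .
  have 2: "x \<cdot> y \<oplus> x = x" using t unfolding Lbullet_def by (metis dl ma)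
  show ?thesis by (simp add: 1 2)
qed

end

locale isr3 = isr +
  assumes c3: "x = x \<cdot> y \<oplus> x \<oplus> x \<cdot> y"
begin
lemma a1: "x \<oplus> x \<cdot> y = x" by (metis aa ai c3)
lemma a2: "x \<cdot> y \<oplus> x = x" by (metis aa ai c3)
lemma lr: "x \<cdot> y \<cdot> x = x \<cdot> y" by (metis a1 a2 ma mi)
lemma ln: "x \<cdot> y \<cdot> z = x \<cdot> z \<cdot> y" by (metis lr ma a2 c3 dr)

lemma least: "least_dl_congruence add mul (Lbullet mul)"
proof -
  have eq: "equivp (Lbullet mul)"
    unfolding Lbullet_def
    proof (rule equivpI)
      show "reflp (\<lambda>a b. a \<cdot> b = a \<and> b \<cdot> a = b)" by (rule reflpI) (simp add: mi)
      show "symp (\<lambda>a b. a \<cdot> b = a \<and> b \<cdot> a = b)" by (rule sympI) simp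
      show "transp (\<lambda>a b. a \<cdot> b = a \<and> b \<cdot> a = b)"
      proof (rule transpI)
        fix a b c assume "a \<cdot> b = a \<and> b \<cdot> a = b" "b \<cdot> c = b \<and> c \<cdot> b = c"
        then show "a \<cdot> c = a \<and> c \<cdot> a = c" by (metis ma)
      qed
    qed
  have cong: "is_congruence add mul (Lbullet mul)"
    unfolding is_congruence_def
  proof (intro conjI eq allI impI)
    fix a b c assume h: "Lbullet mul a b"
    hence ab: "a \<cdot> b = a" and ba: "b \<cdot> a = b" unfolding Lbullet_def by auto
    show "Lbullet mul (a \<oplus> c) (b \<oplus> c)" unfolding Lbullet_def
      by (metis a2 ab ba dl dr mi)
    have "(c \<oplus> a) \<cdot> (c \<oplus> b) = (c \<oplus> c \<cdot> b) \<oplus> (a \<cdot> c \<oplus> a \<cdot> b)"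
      by (subst dr) (simp only: dl mi)
    also have "\<dots> = c \<oplus> (a \<cdot> c \<oplus> a)" by (simp add: a1 ab aa)
    also have "\<dots> = c \<oplus> a" by (simp add: a2)
    finally have x1: "(c \<oplus> a) \<cdot> (c \<oplus> b) = c \<oplus> a" .
    have "(c \<oplus> b) \<cdot> (c \<oplus> a) = (c \<oplus> c \<cdot> a) \<oplus> (b \<cdot> c \<oplus> b \<cdot> a)"
      by (subst dr) (simp only: dl mi)
    also have "\<dots> = c \<oplus> (b \<cdot> c \<oplus> b)" by (simp add: a1 ba aa)
    also have "\<dots> = c \<oplus> b" by (simp add: a2)
    finally have x2: "(c \<oplus> b) \<cdot> (c \<oplus> a) = c \<oplus> b" .
    show "Lbullet mul (c \<oplus> a) (c \<oplus> b)" unfolding Lbullet_def using x1 x2 by simp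
    show "Lbullet mul (a \<cdot> c) (b \<cdot> c)" unfolding Lbullet_def
      by (metis ab ba lr ma)
    show "Lbullet mul (c \<cdot> a) (c \<cdot> b)" unfolding Lbullet_def
      by (metis ab ba lr ma)
  qed
  have dlc: "dl_congruence add mul (Lbullet mul)"
    unfolding dl_congruence_def
  proof (intro conjI cong allI)
    fix x y
    show "Lbullet mul (x \<oplus> y) (y \<oplus> x)" unfolding Lbullet_def
      by (metis a1 a2 dl dr mi)
    show "Lbullet mul (x \<cdot> y) (y \<cdot> x)" unfolding Lbullet_def
      by (metis ln ma mi)
    show "Lbullet mul (x \<oplus> x \<cdot> y) x" unfolding Lbullet_def
      by (simp add: a1 mi)
  qed
  show ?thesis unfolding least_dl_congruence_def
  proof (intro conjI dlc allI impI)
    fix \<sigma> a b assume s: "dl_congruence add mul \<sigma>" and h: "Lbullet mul a b"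
    hence "\<sigma> (a \<cdot> b) (b \<cdot> a)" unfolding dl_congruence_def by blast
    thus "\<sigma> a b" using h unfolding Lbullet_def by simp
  qed
qed
end

theorem theorem4p8:
  fixes add :: "'a \<Rightarrow> 'a \<Rightarrow> 'a" and mul :: "'a \<Rightarrow> 'a \<Rightarrow> 'a"
  assumes "idem_semiring add mul"
  defines "C1 \<equiv> (\<forall>x y z. mul (mul x y) z = mul (mul x z) y) \<and>
                 (\<forall>x y. x = add (add (mul (mul x y) x) x) (mul (mul x y) x))"
      and "C2 \<equiv> (\<forall>x y z. mul x z = add (add (mul (mul x z) y) (mul x z)) (mul (mul x z) y))"
      and "C3 \<equiv> least_dl_congruence add mul (Lbullet mul)"
      and "C3' \<equiv> (\<forall>x y. x = add (add (mul x y) x) (mul x y))"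
  shows "(C1 \<longleftrightarrow> C2) \<and> (C2 \<longleftrightarrow> C3) \<and> (C3 \<longleftrightarrow> C3') \<and> (C1 \<longrightarrow> left_normal_band mul)"
proof -
  interpret isr add mul using assms(1) unfolding idem_semiring_def
    by unfold_locales blast+
  have C2C3': "C2 \<longleftrightarrow> C3'" unfolding C2_def C3'_def by (metis mi)
  have C3'C1: "C3' \<Longrightarrow> C1"
  proof -
    assume "C3'"
    then interpret isr3 add mul by unfold_locales (auto simp: C3'_def)
    have "\<And>x y. x = add (add (mul (mul x y) x) x) (mul (mul x y) x)" by (simp add: lr c3[symmetric])
    thus "C1" unfolding C1_def using ln by blast
  qed
  have C1C3': "C1 \<Longrightarrow> C3'"
  proof -
    assume h: C1
    have l: "\<And>x y. mul (mul x y) x = mul x y"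
    proof -
      fix x y
      have "mul (mul x y) x = mul (mul x x) y" using h unfolding C1_def by blast
      thus "mul (mul x y) x = mul x y" by (simp add: mi)
    qed
    show C3' unfolding C3'_def using h l unfolding C1_def by metis
  qed
  have C3C3': "C3 \<longleftrightarrow> C3'"
  proof
    assume "C3" thus "C3'" unfolding C3_def C3'_def using c3_of_least by blast
  next
    assume "C3'"
    then interpret isr3 add mul by unfold_locales (auto simp: C3'_def)
    show "C3" unfolding C3_def by (rule least)
  qed
  have LN: "C1 \<longrightarrow> left_normal_band mul"
    unfolding C1_def left_normal_band_def using ma mi by blast
  show ?thesis using C2C3' C3'C1 C1C3' C3C3' LN by blast
qed

end
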